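(* Fix $N\ge1$, $\sigma_0>0$, $p_A\in(0,1)$. If $0<\sigma_1<\sigma_0$, the function $a\mapsto\xi_>(a,\sigma_1)$ is non-decreasing on $[0,\infty)$; if $\sigma_1>\sigma_0$, the function $a\mapsto\xi_<(a,\sigma_1)$ is non-decreasing on $[0,\infty)$.
   Context: $\chi^2_N(\lambda,x)=\mathbb{P}(\|Z+\mu\|^2\le x)$ for $Z\sim\mathcal{N}(0,I_N)$, $\|\mu\|^2=\lambda\ge 0$ (noncentral chi-squared cdf), and $\chi^2_{N,qf}(\lambda,p)=\inf\{x:\chi^2_N(\lambda,x)\ge p\}$ for $p\in(0,1)$. Fix $N$, $\sigma_0>0$, $p_A\in(0,1)$. For $a\ge0$ and $0<\sigma_1<\sigma_0$ define $$\xi_>(a,\sigma_1)=\chi^2_N\!\left(\frac{\sigma_1^2a^2}{(\sigma_0^2-\sigma_1^2)^2},\ \frac{\sigma_0^2}{\sigma_1^2}\chi^2_{N,qf}\!\left(\frac{\sigma_0^2a^2}{(\sigma_0^2-\sigma_1^2)^2},1-p_A\right)\right),$$ and for $\sigma_1>\sigma_0$ define $$\xi_<(a,\sigma_1)=1-\chi^2_N\!\left(\frac{\sigma_1^2a^2}{(\sigma_1^2-\sigma_0^2)^2},\ \frac{\sigma_0^2}{\sigma_1^2}\chi^2_{N,qf}\!\left(\frac{\sigma_0^2a^2}{(\sigma_1^2-\sigma_0^2)^2},p_A\right)\right).$$ These equal the maximal probability $\mathbb{P}(f(Y_1)=B)$, $Y_1\sim\mathcal N(x_1,\sigma_1^2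 I_N)$, over binary classifiers $f$ with $\mathbb{P}(f(Y_0)=B)\le 1-p_A$, $Y_0\sim\mathcal N(x_0,\sigma_0^2I_N)$, where $a=\|x_1-x_0\|$. *)

theory Defs
  imports "HOL-Analysis.Analysis"
begin

definition std_gauss :: "('n::finite) itself \<Rightarrow> (real^'n) measure" where
  "std_gauss _ = density lborel
     (\<lambda>z. ennreal ((2 * pi) powr (- real CARD('n) / 2) * exp (- (norm z)\<^sup>2 / 2)))"

text \<open>Noncentral chi-squared cdf: P(|Z + mu|^2 <= x) with |mu|^2 = lam; we take the
  particular mean vector mu with all components sqrt(lam/N) (the value does not
  depend on the choice of mu with |mu|^2 = lam, by rotation invariance).\<close>
definition chi2_cdf :: "('n::finite) itself \<Rightarrow> real \<Rightarrow> real \<Rightarrow> real" where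
  "chi2_cdf T lam x =
     measure (std_gauss T) {z. (norm (z + (\<chi> i. sqrt (lam / real CARD('n)))))\<^sup>2 \<le> x}"

definition chi2_qf :: "('n::finite) itself \<Rightarrow> real \<Rightarrow> real \<Rightarrow> real" where
  "chi2_qf T lam p = Inf {x. chi2_cdf T lam x \<ge> p}"

definition xi_gt :: "('n::finite) itself \<Rightarrow> real \<Rightarrow> real \<Rightarrow> real \<Rightarrow> real \<Rightarrow> real" where
  "xi_gt T sigma0 pA a sigma1 =
     chi2_cdf T (sigma1\<^sup>2 * a\<^sup>2 / (sigma0\<^sup>2 - sigma1\<^sup>2)\<^sup>2)
       (sigma0\<^sup>2 / sigma1\<^sup>2 * chi2_qf T (sigma0\<^sup>2 * a\<^sup>2 / (sigma0\<^sup>2 - sigma1\<^sup>2)\<^sup>2) (1 - pA))"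

definition xi_lt :: "('n::finite) itself \<Rightarrow> real \<Rightarrow> real \<Rightarrow> real \<Rightarrow> real \<Rightarrow> real" where
  "xi_lt T sigma0 pA a sigma1 =
     1 - chi2_cdf T (sigma1\<^sup>2 * a\<^sup>2 / (sigma1\<^sup>2 - sigma0\<^sup>2)\<^sup>2)
       (sigma0\<^sup>2 / sigma1\<^sup>2 * chi2_qf T (sigma0\<^sup>2 * a\<^sup>2 / (sigma1\<^sup>2 - sigma0\<^sup>2)\<^sup>2) pA)"

end

theory Submission imports Defs "HOL-Probability.Probability" begin

definition gd :: "real^'n::finite \<Rightarrow> real" where
 "gd z = (2*pi) powr (- real CARD('n)/2) * exp (-(norm z)\<^sup>2/2)"

lemma std_gauss_eq: "std_gauss (TYPE('n)) = density lborel (\<lambda>z::real^'n::finite. ennreal (gd z))"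
  by (simp add: std_gauss_def gd_def)

lemma gd_prod: "gd (z::real^'n::finite) = (\<Prod>b\<in>Basis. std_normal_density (z \<bullet> b))"
proof -
  have n: "(norm z)\<^sup>2 = (\<Sum>b\<in>Basis. (z \<bullet> b)\<^sup>2)"
    unfolding power2_norm_eq_inner by (subst euclidean_inner) (simp add: power2_eq_square)
  have "exp (-(norm z)\<^sup>2/2) = (\<Prod>b\<in>(Basis::(real^'n) set). exp (-(z \<bullet> b)\<^sup>2/2))"
    unfolding n by (simp add: exp_sum[symmetric] sum_negf sum_divide_distrib)
  moreover have "(2*pi) powr (- real CARD('n)/2) = (1/sqrt(2*pi))^CARD('n)"
    by (simp add: sqrt_def root_powr_inverse powr_minus_divide powr_realpow[symmetric] powr_powr
       powr_divide flip: powr_minus)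
  ultimately show ?thesis
    by (simp add: gd_def std_normal_density_def prod_dividef power_one_over field_simps)
qed

lemma gd_pos: "gd z > 0" by (simp add: gd_def)

lemma gd_meas[measurable]: "gd \<in> borel_measurable borel"
  unfolding gd_def by measurable

lemma prob_gauss: "prob_space (std_gauss TYPE('n::finite))"
proof
  have "(\<integral>\<^sup>+x. std_normal_density x \<partial>lborel) = 1"
    by (subst nn_integral_eq_integral) auto
  then have "(\<integral>\<^sup>+z. ennreal (gd (z::real^'n)) \<partial>lborel) = 1"
    unfolding gd_prod
    by (subst prod_ennreal[symmetric], simp,
        subst nn_integral_lborel_prod[where f="\<lambda>_ x. ennreal (std_normal_density x)"]) auto
  then show "emeasure (std_gauss TYPE('n)) (space (std_gauss TYPE('n))) = 1"
    by (simp add: std_gauss_eq emeasure_density)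
qed

lemma nsq: "(norm (y::'a::euclidean_space))\<^sup>2 = (\<Sum>b\<in>Basis. (y \<bullet> b)\<^sup>2)"
  unfolding power2_norm_eq_inner by (subst euclidean_inner) (simp add: power2_eq_square)

lemma inner_sum_Basis: "b \<in> Basis \<Longrightarrow> (\<Sum>j\<in>Basis. f j *\<^sub>R (j::'a::euclidean_space)) \<bullet> b = f b"
  by (simp add: inner_sum_left inner_Basis if_distrib cong: if_cong)

lemma refl_preserve:
  fixes e t :: "'a::euclidean_space"
  assumes e: "e \<in> Basis" and f[measurable]: "f \<in> borel_measurable borel"
  shows "(\<integral>\<^sup>+z. f z \<partial>lborel) =
     (\<integral>\<^sup>+z. f (t + (\<Sum>j\<in>Basis. ((if j = e then -1 else 1) * (z \<bullet> j)) *\<^sub>R j)) \<partial>lborel)"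
proof -
  define T where "T \<equiv> \<lambda>z::'a. t + (\<Sum>j\<in>Basis. ((if j = e then -1 else (1::real)) * (z \<bullet> j)) *\<^sub>R j)"
  have [measurable]: "T \<in> borel \<rightarrow>\<^sub>M borel" by (simp add: T_def[abs_def])
  have "lborel = density (distr lborel borel T) (\<lambda>_. (\<Prod>j\<in>(Basis::'a set). \<bar>if j = e then -1 else (1::real)\<bar>))"
    unfolding T_def by (rule lborel_affine_euclidean) auto
  also have "(\<lambda>_::'a. (\<Prod>j\<in>(Basis::'a set). \<bar>if j = e then -1 else (1::real)\<bar>)) = (\<lambda>_. 1)"
    by (auto intro!: prod.neutral)
  finally have eq: "lborel = distr lborel borel T" by (simp add: density_1)
  have "(\<integral>\<^sup>+z. f z \<partial>lborel) = (\<integral>\<^sup>+z. f z \<partial>(distr lborel borel T))"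
    by (rule arg_cong[OF eq])
  also have "\<dots> = (\<integral>\<^sup>+z. f (T z) \<partial>lborel)"
    by (rule nn_integral_distr) auto
  finally show ?thesis unfolding T_def .
qed

lemma real_refl_ineq:
  fixes z p q :: real
  assumes "(z+p)\<^sup>2 < (z+q)\<^sup>2" "\<bar>p\<bar> \<le> \<bar>q\<bar>"
  shows "z\<^sup>2 \<le> (p+q+z)\<^sup>2"
proof -
  have h1: "(q-p)*(q+p) \<ge> 0"
  proof -
    have "p\<^sup>2 \<le> q\<^sup>2" using assms(2) by (metis abs_le_square_iff)
    then show ?thesis by (simp add: algebra_simps power2_eq_square)
  qed
  have h2: "(q-p)*(2*z+p+q) > 0" using assms(1) by (simp add: algebra_simps power2_eq_square)
  have "((q-p)*(q+p)) * ((q-p)*(2*z+p+q)) \<ge> 0" using h1 h2 by simp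
  then have "(q-p)\<^sup>2 * ((q+p)*(2*z+p+q)) \<ge> 0" by (simp add: algebra_simps power2_eq_square)
  moreover have "q-p \<noteq> 0" using h2 by auto
  then have "(q-p)\<^sup>2 > 0" by simp
  ultimately have "(q+p)*(2*z+p+q) \<ge> 0" by (simp add: zero_le_mult_iff)
  then show ?thesis by (simp add: algebra_simps power2_eq_square)
qed

lemma anderson_step:
  fixes v v' :: "'a::euclidean_space" and e :: 'a and C :: real
  assumes e: "e \<in> Basis" and same: "\<And>b. b \<in> Basis \<Longrightarrow> b \<noteq> e \<Longrightarrow> v \<bullet> b = v' \<bullet> b"
    and le: "\<bar>v \<bullet> e\<bar> \<le> \<bar>v' \<bullet> e\<bar>" and C: "C \<ge> 0"
  defines "\<mu> \<equiv> density lborel (\<lambda>z. ennreal (C * exp (-(norm z)\<^sup>2/2)))"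
  shows "emeasure \<mu> {z. (norm (z+v'))\<^sup>2 \<le> x} \<le> emeasure \<mu> {z. (norm (z+v))\<^sup>2 \<le> x}"
proof -
  define A where "A = {z. (norm (z+v'))\<^sup>2 \<le> x}"
  define B where "B = {z. (norm (z+v))\<^sup>2 \<le> x}"
  define \<phi> where "\<phi> = (\<lambda>z::'a. ennreal (C * exp (-(norm z)\<^sup>2/2)))"
  have [measurable]: "\<phi> \<in> borel_measurable borel" unfolding \<phi>_def by measurable
  have [measurable]: "A \<in> sets borel" "B \<in> sets borel" unfolding A_def B_def by measurable
  define t where "t = (-(v \<bullet> e + v' \<bullet> e)) *\<^sub>R e"
  define R where "R = (\<lambda>z. t + (\<Sum>j\<in>Basis. ((if j = e then -1 else 1) * (z \<bullet> j)) *\<^sub>R j))"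
  have Rb: "R z \<bullet> b = (if b = e then -(v \<bullet> e + v' \<bullet> e) - z \<bullet> e else z \<bullet> b)" if "b \<in> Basis" for z b
    using that e by (auto simp: R_def t_def inner_add_left inner_sum_Basis inner_Basis)
  have split: "(\<Sum>b\<in>Basis. g b) = g e + (\<Sum>b\<in>Basis - {e}. g b)" for g :: "'a \<Rightarrow> real"
    using e by (simp add: sum.remove)
  have n1: "(norm (R z + v'))\<^sup>2 = (norm (z + v))\<^sup>2" for z
  proof -
    have "(\<Sum>b\<in>Basis - {e}. (R z \<bullet> b + v' \<bullet> b)\<^sup>2) = (\<Sum>b\<in>Basis - {e}. (z \<bullet> b + v \<bullet> b)\<^sup>2)"
      using Rb same by (intro sum.cong) auto
    moreover have "(R z \<bullet> e + v' \<bullet> e)\<^sup>2 = (z \<bullet> e + v \<bullet> e)\<^sup>2"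
      by (simp add: Rb e power2_eq_square algebra_simps)
    ultimately show ?thesis unfolding nsq split by (simp add: inner_add_left)
  qed
  have n2: "(norm (R z + v))\<^sup>2 = (norm (z + v'))\<^sup>2" for z
  proof -
    have "(\<Sum>b\<in>Basis - {e}. (R z \<bullet> b + v \<bullet> b)\<^sup>2) = (\<Sum>b\<in>Basis - {e}. (z \<bullet> b + v' \<bullet> b)\<^sup>2)"
      using Rb same by (intro sum.cong) auto
    moreover have "(R z \<bullet> e + v \<bullet> e)\<^sup>2 = (z \<bullet> e + v' \<bullet> e)\<^sup>2"
      by (simp add: Rb e power2_eq_square algebra_simps)
    ultimately show ?thesis unfolding nsq split by (simp add: inner_add_left)
  qed
  have ind: "indicator (A - B) (R z) = (indicator (B - A) z :: ennreal)" for z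
    by (auto simp: A_def B_def n1 n2 split: split_indicator)
  have phile: "\<phi> (R z) \<le> \<phi> z" if "z \<in> B - A" for z
  proof -
    have "(norm (z+v))\<^sup>2 < (norm (z+v'))\<^sup>2" using that by (auto simp: A_def B_def)
    then have "(z \<bullet> e + v \<bullet> e)\<^sup>2 < (z \<bullet> e + v' \<bullet> e)\<^sup>2"
    proof -
      have "(\<Sum>b\<in>Basis - {e}. (z \<bullet> b + v \<bullet> b)\<^sup>2) = (\<Sum>b\<in>Basis - {e}. (z \<bullet> b + v' \<bullet> b)\<^sup>2)"
        using same by (intro sum.cong) auto
      then show ?thesis using \<open>(norm (z+v))\<^sup>2 < (norm (z+v'))\<^sup>2\<close> unfolding nsq split by (simp add: inner_add_left)
    qed
    then have "(z \<bullet> e)\<^sup>2 \<le> (v \<bullet> e + v' \<bullet> e + z \<bullet> e)\<^sup>2"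
      using le by (rule real_refl_ineq)
    then have "(norm z)\<^sup>2 \<le> (norm (R z))\<^sup>2"
    proof -
      have "(\<Sum>b\<in>Basis - {e}. (R z \<bullet> b)\<^sup>2) = (\<Sum>b\<in>Basis - {e}. (z \<bullet> b)\<^sup>2)"
        using Rb by (intro sum.cong) auto
      moreover have "(R z \<bullet> e)\<^sup>2 = (v \<bullet> e + v' \<bullet> e + z \<bullet> e)\<^sup>2"
        by (simp add: Rb e power2_eq_square algebra_simps)
      ultimately show ?thesis using \<open>(z \<bullet> e)\<^sup>2 \<le> _\<close> unfolding nsq split by simp
    qed
    then show ?thesis unfolding \<phi>_def using C
      by (auto intro!: ennreal_leI mult_left_mono)
  qed
  have "emeasure \<mu> (A - B) = (\<integral>\<^sup>+z. \<phi> z * indicator (A - B) z \<partial>lborel)"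
    unfolding \<mu>_def \<phi>_def by (subst emeasure_density) auto
  also have "\<dots> = (\<integral>\<^sup>+z. \<phi> (R z) * indicator (A - B) (R z) \<partial>lborel)"
    unfolding R_def by (rule refl_preserve[OF e]) measurable
  also have "\<dots> = (\<integral>\<^sup>+z. \<phi> (R z) * indicator (B - A) z \<partial>lborel)"
    by (simp add: ind)
  also have "\<dots> \<le> (\<integral>\<^sup>+z. \<phi> z * indicator (B - A) z \<partial>lborel)"
    by (intro nn_integral_mono) (auto simp: phile split: split_indicator)
  also have "\<dots> = emeasure \<mu> (B - A)"
    unfolding \<mu>_def \<phi>_def by (subst emeasure_density) auto
  finally have d: "emeasure \<mu> (A - B) \<le> emeasure \<mu> (B - A)" .
  have sA: "A \<in> sets \<mu>" "B \<in> sets \<mu>" by (auto simp: \<mu>_def)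
  have "emeasure \<mu> A = emeasure \<mu> (A \<inter> B) + emeasure \<mu> (A - B)"
    using sA by (subst plus_emeasure) (auto intro!: arg_cong[where f="emeasure \<mu>"])
  also have "\<dots> \<le> emeasure \<mu> (A \<inter> B) + emeasure \<mu> (B - A)"
    using d by (rule add_left_mono)
  also have "\<dots> = emeasure \<mu> B"
    using sA by (subst plus_emeasure) (auto intro!: arg_cong[where f="emeasure \<mu>"])
  finally show ?thesis unfolding A_def B_def .
qed

lemma anderson:
  fixes m m' :: real and C :: real
  assumes le: "\<bar>m\<bar> \<le> \<bar>m'\<bar>" and C: "C \<ge> 0"
  defines "\<mu> \<equiv> density lborel (\<lambda>z::'a::euclidean_space. ennreal (C * exp (-(norm z)\<^sup>2/2)))"
  shows "emeasure \<mu> {z. (norm (z + m' *\<^sub>R (\<Sum>b\<in>Basis. b)))\<^sup>2 \<le> x}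
       \<le> emeasure \<mu> {z. (norm (z + m *\<^sub>R (\<Sum>b\<in>Basis. b)))\<^sup>2 \<le> x}"
proof -
  define w where "w S = (\<Sum>b\<in>Basis. (if b \<in> S then m' else m) *\<^sub>R (b::'a))" for S
  have wb: "w S \<bullet> b = (if b \<in> S then m' else m)" if "b \<in> Basis" for S b
    using that unfolding w_def by (rule inner_sum_Basis)
  have main: "S \<subseteq> Basis \<Longrightarrow> emeasure \<mu> {z. (norm (z + w S))\<^sup>2 \<le> x} \<le> emeasure \<mu> {z. (norm (z + w {}))\<^sup>2 \<le> x}"
    if "finite S" for S
    using that
  proof (induction S rule: finite_induct)
    case empty then show ?case by simp
  next
    case (insert e S)
    have "emeasure \<mu> {z. (norm (z + w (insert e S)))\<^sup>2 \<le> x} \<le> emeasure \<mu> {z. (norm (z + w S))\<^sup>2 \<le> x}"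
      unfolding \<mu>_def
    proof (rule anderson_step)
      show "e \<in> Basis" using insert by auto
      show "w S \<bullet> b = w (insert e S) \<bullet> b" if "b \<in> Basis" "b \<noteq> e" for b
        using that by (simp add: wb)
      show "\<bar>w S \<bullet> e\<bar> \<le> \<bar>w (insert e S) \<bullet> e\<bar>"
        using insert le by (simp add: wb)
    qed (rule C)
    also have "\<dots> \<le> emeasure \<mu> {z. (norm (z + w {}))\<^sup>2 \<le> x}"
      using insert by auto
    finally show ?case .
  qed
  have "w Basis = m' *\<^sub>R (\<Sum>b\<in>Basis. b)" "w {} = m *\<^sub>R (\<Sum>b\<in>Basis. b)"
    by (simp_all add: w_def scaleR_sum_right)
  then show ?thesis using main[of Basis] by simp
qed

definition G :: "'n::finite itself \<Rightarrow> real \<Rightarrow> real \<Rightarrow> real" where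
  "G T m x = measure (std_gauss T) {z. (norm (z + vec m))\<^sup>2 \<le> x}"

lemma chi2_G: "chi2_cdf TYPE('n::finite) lam x = G TYPE('n) (sqrt (lam / CARD('n))) x"
  by (simp add: chi2_cdf_def G_def vec_def)

lemma vec_sum_Basis: "(vec m :: real^'n::finite) = m *\<^sub>R (\<Sum>b\<in>Basis. b)"
proof (subst euclidean_eq_iff, intro ballI)
  fix b :: "real^'n" assume b: "b \<in> Basis"
  then obtain i where i: "b = axis i 1" by (auto simp: Basis_vec_def)
  have "vec m \<bullet> b = m" unfolding i by (simp add: inner_axis)
  moreover have "(\<Sum>j\<in>Basis. 1 *\<^sub>R j) \<bullet> b = (1::real)" using b by (rule inner_sum_Basis)
  ultimately show "vec m \<bullet> b = (m *\<^sub>R (\<Sum>b\<in>Basis. b)) \<bullet> b" by simp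
qed

lemma G_anderson:
  assumes "\<bar>m\<bar> \<le> \<bar>m'\<bar>"
  shows "G TYPE('n::finite) m' x \<le> G TYPE('n) m x"
proof -
  interpret prob_space "std_gauss TYPE('n)" by (rule prob_gauss)
  have "emeasure (std_gauss TYPE('n)) {z. (norm (z + vec m'))\<^sup>2 \<le> x}
     \<le> emeasure (std_gauss TYPE('n)) {z. (norm (z + vec m))\<^sup>2 \<le> x}"
    unfolding std_gauss_def vec_sum_Basis
    by (rule anderson[OF assms]) simp
  then show ?thesis unfolding G_def by (simp add: emeasure_eq_measure)
qed

lemma sets_gauss[simp]: "sets (std_gauss TYPE('n::finite)) = sets borel"
  by (simp add: std_gauss_def)

lemma space_gauss[simp]: "space (std_gauss TYPE('n::finite)) = UNIV"
  by (simp add: std_gauss_def)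

lemma Gset_meas[measurable]: "{z::real^'n::finite. (norm (z + v))\<^sup>2 \<le> x} \<in> sets borel"
  by measurable

lemma Gset_meas_lt[measurable]: "{z::real^'n::finite. (norm (z + v))\<^sup>2 < x} \<in> sets borel"
  by measurable

lemma G_mono: "x \<le> y \<Longrightarrow> G TYPE('n::finite) m x \<le> G TYPE('n) m y"
proof -
  assume "x \<le> y"
  interpret prob_space "std_gauss TYPE('n)" by (rule prob_gauss)
  show ?thesis unfolding G_def using \<open>x \<le> y\<close>
    by (intro finite_measure_mono) auto
qed

lemma G_neg: "x < 0 \<Longrightarrow> G TYPE('n::finite) m x = 0"
proof -
  assume "x < 0"
  then have "{z::real^'n. (norm (z + vec m))\<^sup>2 \<le> x} = {}"
    by (auto simp: not_le intro: less_le_trans[OF _ zero_le_power2])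
  then show ?thesis by (simp add: G_def)
qed

lemma G_le1: "G TYPE('n::finite) m x \<le> 1"
proof -
  interpret prob_space "std_gauss TYPE('n)" by (rule prob_gauss)
  show ?thesis unfolding G_def by simp
qed

lemma G_top: "(\<lambda>k. G TYPE('n::finite) m (real k)) \<longlonglongrightarrow> 1"
proof -
  interpret prob_space "std_gauss TYPE('n)" by (rule prob_gauss)
  have "(\<lambda>k. measure (std_gauss TYPE('n)) {z::real^'n. (norm (z + vec m))\<^sup>2 \<le> real k})
     \<longlonglongrightarrow> measure (std_gauss TYPE('n)) (\<Union>k. {z::real^'n. (norm (z + vec m))\<^sup>2 \<le> real k})"
    by (intro finite_Lim_measure_incseq) (auto simp: incseq_def order_trans)
  moreover have "(\<Union>k. {z::real^'n. (norm (z + vec m))\<^sup>2 \<le> real k}) = UNIV"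
    using real_arch_simple by auto
  ultimately show ?thesis using prob_space by (simp add: G_def)
qed

lemma sphere_null: "measure (std_gauss TYPE('n::finite)) {z::real^'n. (norm (z + v))\<^sup>2 = x} = 0"
proof -
  have sub: "{z::real^'n. (norm (z + v))\<^sup>2 = x} \<subseteq> sphere (-v) (sqrt x)"
    by (auto simp: dist_norm norm_minus_commute)
  have "sphere (-v) (sqrt x) \<in> null_sets lborel"
    using negligible_sphere[of "-v" "sqrt x"]
    by (auto simp: null_sets_completion_iff negligible_iff_null_sets negligible_convex_frontier)
  then have "{z::real^'n. (norm (z + v))\<^sup>2 = x} \<in> null_sets lborel"
    by (rule null_sets_subset[OF _ _ sub]) measurable
  then have "emeasure (std_gauss TYPE('n)) {z::real^'n. (norm (z + v))\<^sup>2 = x} = 0"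
    unfolding std_gauss_def
    by (subst emeasure_density) (auto intro: nn_integral_null_set)
  then show ?thesis by (simp add: measure_def)
qed

definition Q :: "'n::finite itself \<Rightarrow> real \<Rightarrow> real \<Rightarrow> real" where
  "Q T m p = Inf {x. G T m x \<ge> p}"

lemma qf_Q: "chi2_qf TYPE('n::finite) lam p = Q TYPE('n) (sqrt (lam / CARD('n))) p"
  by (simp add: chi2_qf_def Q_def chi2_G)

lemma Q_exact:
  assumes p: "0 < p" "p < 1"
  shows "G TYPE('n::finite) m (Q TYPE('n) m p) = p"
proof -
  interpret prob_space "std_gauss TYPE('n)" by (rule prob_gauss)
  define S where "S = {x. G TYPE('n) m x \<ge> p}"
  define q where "q = Q TYPE('n) m p"
  have qS: "q = Inf S" by (simp add: q_def Q_def S_def)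
  have "eventually (\<lambda>k. G TYPE('n) m (real k) > p) sequentially"
    by (rule order_tendstoD(1)[OF G_top p(2)])
  then obtain k where "G TYPE('n) m (real k) > p" by (auto dest: eventually_happens)
  then have ne: "S \<noteq> {}" by (auto simp: S_def intro!: exI[of _ "real k"])
  have S0: "x \<ge> 0" if "x \<in> S" for x
  proof (rule ccontr)
    assume "\<not> x \<ge> 0"
    then have "G TYPE('n) m x = 0" by (intro G_neg) simp
    with that p show False by (simp add: S_def)
  qed
  have bdd: "bdd_below S" using S0 by (intro bdd_belowI[of _ 0]) auto
  have above: "G TYPE('n) m x \<ge> p" if xq: "x > q" for x
  proof -
    obtain s where "s \<in> S" "s < x" using cInf_less_iff[OF ne bdd] xq qS by auto
    moreover have "G TYPE('n) m s \<le> G TYPE('n) m x" by (rule G_mono) (use \<open>s < x\<close> in simp)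
    ultimately show ?thesis by (auto simp: S_def)
  qed
  have below: "G TYPE('n) m x < p" if "x < q" for x
  proof (rule ccontr)
    assume "\<not> ?thesis"
    then have "x \<in> S" by (auto simp: S_def)
    then have "q \<le> x" unfolding qS by (rule cInf_lower[OF _ bdd])
    then show False using that by simp
  qed
  let ?A = "\<lambda>x. {z::real^'n. (norm (z + vec m))\<^sup>2 \<le> x}"
  have fr: "1/(real n+1) \<le> 1/(real k+1)" if "k \<le> n" for k n :: nat
    using that by (intro divide_left_mono) auto
  have "(\<lambda>k. measure (std_gauss TYPE('n)) (?A (q + 1 / (real k + 1))))
      \<longlonglongrightarrow> measure (std_gauss TYPE('n)) (\<Inter>k. ?A (q + 1 / (real k + 1)))"
  proof (intro finite_Lim_measure_decseq)
    show "decseq (\<lambda>k. ?A (q + 1 / (real k + 1)))" unfolding decseq_def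
    proof (intro allI impI subsetI)
      fix k n z assume "k \<le> n" and z: "z \<in> ?A (q + 1 / (real n + 1))"
      have "(norm (z + vec m))\<^sup>2 \<le> q + 1 / (real n + 1)" using z by simp
      then have "(norm (z + vec m))\<^sup>2 \<le> q + 1 / (real k + 1)" using fr[OF \<open>k \<le> n\<close>] by linarith
      then show "z \<in> ?A (q + 1 / (real k + 1))" by simp
    qed
  qed (intro image_subsetI, subst sets_gauss, rule Gset_meas)
  moreover have "(\<Inter>k. ?A (q + 1 / (real k + 1))) = ?A q"
  proof (intro set_eqI iffI)
    fix z assume "z \<in> (\<Inter>k. ?A (q + 1 / (real k + 1)))"
    then have h: "(norm (z + vec m))\<^sup>2 \<le> q + 1 / (real k + 1)" for k by auto
    show "z \<in> ?A q"
    proof (rule ccontr)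
      assume "z \<notin> ?A q"
      then have d: "(norm (z + vec m))\<^sup>2 - q > 0" by auto
      then obtain k where "1 / real (Suc k) < (norm (z + vec m))\<^sup>2 - q"
        by (rule nat_approx_posE)
      then show False using h[of k] by (simp add: add.commute)
    qed
  next
    fix z assume z: "z \<in> ?A q"
    show "z \<in> (\<Inter>k. ?A (q + 1 / (real k + 1)))"
    proof
      fix k :: nat
      have "0 < 1 / (real k + 1)" by simp
      moreover have "(norm (z + vec m))\<^sup>2 \<le> q" using z by simp
      ultimately have "(norm (z + vec m))\<^sup>2 \<le> q + 1 / (real k + 1)" by linarith
      then show "z \<in> ?A (q + 1 / (real k + 1))" by simp
    qed
  qed
  ultimately have "(\<lambda>k. G TYPE('n) m (q + 1 / (real k + 1))) \<longlonglongrightarrow> G TYPE('n) m q"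
    by (simp add: G_def)
  then have ge: "p \<le> G TYPE('n) m q"
    by (rule LIMSEQ_le_const) (auto intro!: above)
  have "(\<lambda>k. measure (std_gauss TYPE('n)) (?A (q - 1 / (real k + 1))))
      \<longlonglongrightarrow> measure (std_gauss TYPE('n)) (\<Union>k. ?A (q - 1 / (real k + 1)))"
  proof (intro finite_Lim_measure_incseq)
    show "incseq (\<lambda>k. ?A (q - 1 / (real k + 1)))" unfolding incseq_def
    proof (intro allI impI subsetI)
      fix k n z assume "k \<le> n" and z: "z \<in> ?A (q - 1 / (real k + 1))"
      have "(norm (z + vec m))\<^sup>2 \<le> q - 1 / (real k + 1)" using z by simp
      then have "(norm (z + vec m))\<^sup>2 \<le> q - 1 / (real n + 1)" using fr[OF \<open>k \<le> n\<close>] by linarith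
      then show "z \<in> ?A (q - 1 / (real n + 1))" by simp
    qed
  qed (intro image_subsetI, subst sets_gauss, rule Gset_meas)
  then have Ule: "measure (std_gauss TYPE('n)) (\<Union>k. ?A (q - 1 / (real k + 1))) \<le> p"
    by (rule LIMSEQ_le_const2) (auto simp: G_def[symmetric] intro!: less_imp_le[OF below])
  have sub: "?A q \<subseteq> (\<Union>k. ?A (q - 1 / (real k + 1))) \<union> {z. (norm (z + vec m))\<^sup>2 = q}"
  proof
    fix z assume z: "z \<in> ?A q"
    show "z \<in> (\<Union>k. ?A (q - 1 / (real k + 1))) \<union> {z. (norm (z + vec m))\<^sup>2 = q}"
    proof (cases "(norm (z + vec m))\<^sup>2 = q")
      case False
      then have "q - (norm (z + vec m))\<^sup>2 > 0" using z by auto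
      then obtain k where "1 / real (Suc k) < q - (norm (z + vec m))\<^sup>2"
        by (rule nat_approx_posE)
      then have "(norm (z + vec m))\<^sup>2 \<le> q - 1 / (real k + 1)" by (simp add: add.commute)
      then have "z \<in> ?A (q - 1 / (real k + 1))" by simp
      then show ?thesis by blast
    qed simp
  qed
  have U: "(\<Union>k. ?A (q - 1 / (real k + 1))) \<in> sets borel" by measurable
  have Sp: "{z::real^'n. (norm (z + vec m))\<^sup>2 = q} \<in> sets borel" by measurable
  from sub have "G TYPE('n) m q \<le> measure (std_gauss TYPE('n)) ((\<Union>k. ?A (q - 1 / (real k + 1))) \<union> {z. (norm (z + vec m))\<^sup>2 = q})"
    unfolding G_def by (intro finite_measure_mono) (use U Sp in simp_all)
  also have "\<dots> \<le> measure (std_gauss TYPE('n)) (\<Union>k. ?A (q - 1 / (real k + 1))) + measure (std_gauss TYPE('n)) {z. (norm (z + vec m))\<^sup>2 = q}"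
    by (intro measure_subadditive) (use U Sp in simp_all)
  finally have "G TYPE('n) m q \<le> p" using Ule sphere_null[where 'n='n] by simp
  with ge show ?thesis unfolding q_def by simp
qed

lemma NP:
  fixes densA densB :: "'a \<Rightarrow> real" and N :: "'a measure"
  assumes fin0: "finite_measure M0" and fin1: "finite_measure M1"
    and M0: "M0 = density N (\<lambda>y. ennreal (densA y))" and M1: "M1 = density N (\<lambda>y. ennreal (densB y))"
    and [measurable]: "densA \<in> borel_measurable N" "densB \<in> borel_measurable N"
    and densA: "\<And>y. densA y \<ge> 0" and densB: "\<And>y. densB y \<ge> 0" and K: "K \<ge> 0"
    and D[measurable]: "D \<in> sets N" and S[measurable]: "S \<in> sets N"
    and inD: "\<And>y. y \<in> D \<Longrightarrow> K * densA y \<le> densB y"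
    and outD: "\<And>y. y \<notin> D \<Longrightarrow> densB y \<le> K * densA y"
    and le: "measure M0 S \<le> measure M0 D"
  shows "measure M1 S \<le> measure M1 D"
proof -
  interpret F0: finite_measure M0 by (rule fin0)
  interpret F1: finite_measure M1 by (rule fin1)
  have s0[simp]: "sets M0 = sets N" and s1[simp]: "sets M1 = sets N" by (simp_all add: M0 M1)
  have e1: "emeasure M1 (S - D) \<le> ennreal K * emeasure M0 (S - D)"
  proof -
    have "emeasure M1 (S - D) = (\<integral>\<^sup>+y. ennreal (densB y) * indicator (S - D) y \<partial>N)"
      unfolding M1 by (subst emeasure_density) auto
    also have "\<dots> \<le> (\<integral>\<^sup>+y. ennreal K * (ennreal (densA y) * indicator (S - D) y) \<partial>N)"
      by (intro nn_integral_mono)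
         (auto simp: outD K densA ennreal_mult[symmetric] intro!: ennreal_leI split: split_indicator)
    also have "\<dots> = ennreal K * (\<integral>\<^sup>+y. ennreal (densA y) * indicator (S - D) y \<partial>N)"
      by (rule nn_integral_cmult) auto
    also have "\<dots> = ennreal K * emeasure M0 (S - D)"
      unfolding M0 by (subst emeasure_density) auto
    finally show ?thesis .
  qed
  have e2: "ennreal K * emeasure M0 (D - S) \<le> emeasure M1 (D - S)"
  proof -
    have "ennreal K * emeasure M0 (D - S) = ennreal K * (\<integral>\<^sup>+y. ennreal (densA y) * indicator (D - S) y \<partial>N)"
      unfolding M0 by (subst emeasure_density) auto
    also have "\<dots> = (\<integral>\<^sup>+y. ennreal K * (ennreal (densA y) * indicator (D - S) y) \<partial>N)"
      by (rule nn_integral_cmult[symmetric]) auto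
    also have "\<dots> \<le> (\<integral>\<^sup>+y. ennreal (densB y) * indicator (D - S) y \<partial>N)"
      by (intro nn_integral_mono)
         (auto simp: inD K densA ennreal_mult[symmetric] intro!: ennreal_leI split: split_indicator)
    also have "\<dots> = emeasure M1 (D - S)"
      unfolding M1 by (subst emeasure_density) auto
    finally show ?thesis .
  qed
  have r1: "measure M1 (S - D) \<le> K * measure M0 (S - D)"
    using e1 K by (simp add: F0.emeasure_eq_measure F1.emeasure_eq_measure ennreal_mult[symmetric]
       ennreal_le_iff)
  have r2: "K * measure M0 (D - S) \<le> measure M1 (D - S)"
    using e2 K by (simp add: F0.emeasure_eq_measure F1.emeasure_eq_measure ennreal_mult[symmetric]
       ennreal_le_iff)
  have d0S: "measure M0 (S - D) = measure M0 S - measure M0 (S \<inter> D)"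
    by (rule F0.finite_measure_Diff') auto
  have d0D: "measure M0 (D - S) = measure M0 D - measure M0 (S \<inter> D)"
    by (subst F0.finite_measure_Diff') (auto simp: Int_commute)
  have d1S: "measure M1 (S - D) = measure M1 S - measure M1 (S \<inter> D)"
    by (rule F1.finite_measure_Diff') auto
  have d1D: "measure M1 (D - S) = measure M1 D - measure M1 (S \<inter> D)"
    by (subst F1.finite_measure_Diff') (auto simp: Int_commute)
  have "measure M0 (S - D) \<le> measure M0 (D - S)" using le d0S d0D by simp
  then have "K * measure M0 (S - D) \<le> K * measure M0 (D - S)" using K by (rule mult_left_mono)
  then have "measure M1 (S - D) \<le> measure M1 (D - S)" using r1 r2 by linarith
  then show ?thesis using d1S d1D by simp
qed

definition pd :: "real \<Rightarrow> real^'n::finite \<Rightarrow> real^'n \<Rightarrow> real" where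
  "pd \<sigma> t y = (2*pi) powr (- real CARD('n)/2) / \<sigma>^CARD('n) * exp (-(norm (y - t))\<^sup>2/(2*\<sigma>\<^sup>2))"

definition Mg :: "real \<Rightarrow> real^'n::finite \<Rightarrow> (real^'n) measure" where
  "Mg \<sigma> t = density lborel (\<lambda>y. ennreal (pd \<sigma> t y))"

lemma pd_meas[measurable]: "pd \<sigma> t \<in> borel_measurable borel"
  unfolding pd_def by measurable

lemma pd_nonneg: "\<sigma> > 0 \<Longrightarrow> pd \<sigma> t y \<ge> 0"
  by (simp add: pd_def)

lemma sets_Mg[simp]: "sets (Mg \<sigma> t) = sets borel"
  by (simp add: Mg_def)

lemma Mg_emeasure:
  fixes t :: "real^'n::finite"
  assumes s: "\<sigma> > 0" and S[measurable]: "S \<in> sets borel"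
  shows "emeasure (Mg \<sigma> t) S = emeasure (std_gauss TYPE('n)) {z. t + \<sigma> *\<^sub>R z \<in> S}"
proof -
  have [measurable]: "(\<lambda>x::real^'n. t + \<sigma> *\<^sub>R x) \<in> borel \<rightarrow>\<^sub>M borel" by measurable
  have eq: "(lborel::(real^'n) measure) = density (distr lborel borel (\<lambda>x. t + \<sigma> *\<^sub>R x)) (\<lambda>_. \<bar>\<sigma>\<bar>^DIM(real^'n))"
    using s by (intro lborel_affine) simp
  have pt: "ennreal (\<bar>\<sigma>\<bar>^DIM(real^'n)) * (ennreal (pd \<sigma> t (t + \<sigma> *\<^sub>R x)) * indicator S (t + \<sigma> *\<^sub>R x))
      = ennreal (gd x) * indicator {z. t + \<sigma> *\<^sub>R z \<in> S} x" for x :: "real^'n"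
  proof -
    have "\<bar>\<sigma>\<bar>^DIM(real^'n) * pd \<sigma> t (t + \<sigma> *\<^sub>R x) = gd x"
      using s by (simp add: pd_def gd_def power2_eq_square field_simps)
    then show ?thesis using s
      by (auto simp: ennreal_mult[symmetric] pd_nonneg split: split_indicator)
  qed
  have "emeasure (Mg \<sigma> t) S = (\<integral>\<^sup>+y. ennreal (pd \<sigma> t y) * indicator S y \<partial>lborel)"
    unfolding Mg_def by (subst emeasure_density) auto
  also have "\<dots> = (\<integral>\<^sup>+y. ennreal (pd \<sigma> t y) * indicator S y \<partial>(density (distr lborel borel (\<lambda>x. t + \<sigma> *\<^sub>R x)) (\<lambda>_. \<bar>\<sigma>\<bar>^DIM(real^'n))))"
    by (rule arg_cong[OF eq])
  also have "\<dots> = (\<integral>\<^sup>+y. ennreal (\<bar>\<sigma>\<bar>^DIM(real^'n)) * (ennreal (pd \<sigma> t y) * indicator S y) \<partial>(distr lborel borel (\<lambda>x. t + \<sigma> *\<^sub>R x)))"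
    by (subst nn_integral_density) auto
  also have "\<dots> = (\<integral>\<^sup>+x. ennreal (\<bar>\<sigma>\<bar>^DIM(real^'n)) * (ennreal (pd \<sigma> t (t + \<sigma> *\<^sub>R x)) * indicator S (t + \<sigma> *\<^sub>R x)) \<partial>lborel)"
    by (subst nn_integral_distr) auto
  also have "\<dots> = (\<integral>\<^sup>+x. ennreal (gd x) * indicator {z. t + \<sigma> *\<^sub>R z \<in> S} x \<partial>lborel)"
    by (intro nn_integral_cong) (rule pt)
  also have "\<dots> = emeasure (std_gauss TYPE('n)) {z. t + \<sigma> *\<^sub>R z \<in> S}"
    unfolding std_gauss_eq by (subst emeasure_density) auto
  finally show ?thesis .
qed

lemma Mg_prob: "\<sigma> > 0 \<Longrightarrow> prob_space (Mg \<sigma> (t::real^'n::finite))"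
proof
  assume s: "\<sigma> > 0"
  interpret P: prob_space "std_gauss TYPE('n)" by (rule prob_gauss)
  show "emeasure (Mg \<sigma> t) (space (Mg \<sigma> t)) = 1"
    using Mg_emeasure[OF s, of UNIV t] P.emeasure_space_1 by (simp add: Mg_def)
qed

lemma Mg_ball:
  assumes s: "\<sigma> > 0"
  shows "measure (Mg \<sigma> (vec d :: real^'n::finite)) {y. (norm (y + vec k))\<^sup>2 \<le> R}
       = G TYPE('n) ((d + k) / \<sigma>) (R / \<sigma>\<^sup>2)"
proof -
  have "{z::real^'n. vec d + \<sigma> *\<^sub>R z \<in> {y. (norm (y + vec k))\<^sup>2 \<le> R}}
      = {z. (norm (z + vec ((d + k) / \<sigma>)))\<^sup>2 \<le> R / \<sigma>\<^sup>2}"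
  proof -
    have v: "vec d + \<sigma> *\<^sub>R z + vec k = \<sigma> *\<^sub>R (z + vec ((d + k) / \<sigma>))" for z :: "real^'n"
      using s by (simp add: vec_eq_iff field_simps)
    have "(norm (vec d + \<sigma> *\<^sub>R z + vec k))\<^sup>2 \<le> R \<longleftrightarrow> (norm (z + vec ((d + k) / \<sigma>)))\<^sup>2 \<le> R / \<sigma>\<^sup>2"
      for z :: "real^'n"
      using s unfolding v by (simp add: power_mult_distrib pos_le_divide_eq mult.commute)
    then show ?thesis by auto
  qed
  then show ?thesis
    using Mg_emeasure[OF s, of "{y. (norm (y + vec k))\<^sup>2 \<le> R}" "vec d :: real^'n"]
    by (simp add: measure_def G_def)
qed

lemma norm_vec_expand:
  "(norm (y + vec k :: real^'n::finite))\<^sup>2 = (norm y)\<^sup>2 + 2*k*(\<Sum>i\<in>UNIV. y$i) + k\<^sup>2 * CARD('n)"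
  unfolding power2_norm_eq_inner
  by (simp add: inner_vec_def power2_eq_square algebra_simps sum.distrib sum_distrib_left)

lemma alg:
  fixes A B k n N S :: real
  assumes "A > 0" "B > 0"
  shows "-(N - 2*((B-A)/A*k)*S + ((B-A)/A*k)\<^sup>2 * n)/(2*B) =
     (-(((B-A)/A*k)\<^sup>2 * n)/(2*B) - ((1/A - 1/B)/2) * k\<^sup>2 * n) + ((1/A - 1/B)/2) * (N + 2*k*S + k\<^sup>2*n) + (-N/(2*A))"
  using assms by (simp add: field_simps power2_eq_square)

lemma LR:
  fixes \<sigma>0 \<sigma>1 k R :: real
  assumes s0: "\<sigma>0 > 0" and s1: "\<sigma>1 > 0"
  defines "\<kappa> \<equiv> (1/\<sigma>0\<^sup>2 - 1/\<sigma>1\<^sup>2)/2"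
  shows "\<exists>K\<ge>0. \<forall>y::real^'n::finite.
    (\<kappa> * R \<le> \<kappa> * (norm (y + vec k))\<^sup>2 \<longrightarrow> K * pd \<sigma>0 0 y \<le> pd \<sigma>1 (vec ((\<sigma>1\<^sup>2-\<sigma>0\<^sup>2)/\<sigma>0\<^sup>2*k)) y) \<and>
    (\<kappa> * (norm (y + vec k))\<^sup>2 \<le> \<kappa> * R \<longrightarrow> pd \<sigma>1 (vec ((\<sigma>1\<^sup>2-\<sigma>0\<^sup>2)/\<sigma>0\<^sup>2*k)) y \<le> K * pd \<sigma>0 0 y)"
proof -
  define n where "n = real CARD('n)"
  define d1 where "d1 = (\<sigma>1\<^sup>2-\<sigma>0\<^sup>2)/\<sigma>0\<^sup>2*k"
  define \<beta> where "\<beta> = -(d1\<^sup>2 * n)/(2*\<sigma>1\<^sup>2) - \<kappa> * k\<^sup>2 * n"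
  define K0 where "K0 = (\<sigma>0/\<sigma>1)^CARD('n) * exp \<beta>"
  define C where "C = (2*pi) powr (- real CARD('n)/2)"
  have K0: "K0 > 0" using s0 s1 by (simp add: K0_def)
  have key: "pd \<sigma>1 (vec d1) y = K0 * exp (\<kappa> * (norm (y + vec k))\<^sup>2) * pd \<sigma>0 0 y" for y :: "real^'n"
  proof -
    define S where "S = (\<Sum>i\<in>UNIV. y$i)"
    have e1: "(norm (y - vec d1))\<^sup>2 = (norm y)\<^sup>2 - 2*d1*S + d1\<^sup>2 * n"
    proof -
      have "y - vec d1 = y + vec (-d1)" by (simp add: vec_eq_iff)
      then show ?thesis using norm_vec_expand[of y "-d1"] by (simp only: S_def n_def) simp
    qed
    have e2: "(norm (y + vec k))\<^sup>2 = (norm y)\<^sup>2 + 2*k*S + k\<^sup>2 * n"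
      using norm_vec_expand[of y k] by (simp add: S_def n_def)
    have ex: "-(norm (y - vec d1))\<^sup>2/(2*\<sigma>1\<^sup>2) = \<beta> + \<kappa> * (norm (y + vec k))\<^sup>2 + (-(norm y)\<^sup>2/(2*\<sigma>0\<^sup>2))"
      unfolding e1 e2 unfolding \<beta>_def \<kappa>_def d1_def using s0 s1
      by (intro alg) auto
    have "pd \<sigma>1 (vec d1) y = C / \<sigma>1^CARD('n) * exp (\<beta> + \<kappa> * (norm (y + vec k))\<^sup>2 + (-(norm y)\<^sup>2/(2*\<sigma>0\<^sup>2)))"
      unfolding pd_def C_def ex[symmetric] by simp
    also have "\<dots> = C / \<sigma>1^CARD('n) * (exp \<beta> * exp (\<kappa> * (norm (y + vec k))\<^sup>2) * exp (-(norm y)\<^sup>2/(2*\<sigma>0\<^sup>2)))"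
      by (simp only: exp_add)
    also have "\<dots> = ((\<sigma>0/\<sigma>1)^CARD('n) * exp \<beta>) * exp (\<kappa> * (norm (y + vec k))\<^sup>2) * (C / \<sigma>0^CARD('n) * exp (-(norm y)\<^sup>2/(2*\<sigma>0\<^sup>2)))"
    proof -
      have "C / \<sigma>1^CARD('n) * (a * b * c) = ((\<sigma>0/\<sigma>1)^CARD('n) * a) * b * (C / \<sigma>0^CARD('n) * c)" for a b c :: real
        using s0 s1 by (simp add: power_divide field_simps)
      then show ?thesis by blast
    qed
    also have "\<dots> = K0 * exp (\<kappa> * (norm (y + vec k))\<^sup>2) * pd \<sigma>0 0 y"
      unfolding pd_def K0_def C_def by simp
    finally show ?thesis .
  qed
  show ?thesis
  proof (intro exI[of _ "K0 * exp (\<kappa> * R)"] conjI allI impI)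
    show "0 \<le> K0 * exp (\<kappa> * R)" using K0 by simp
  next
    fix y :: "real^'n" assume "\<kappa> * R \<le> \<kappa> * (norm (y + vec k))\<^sup>2"
    then have "exp (\<kappa> * R) \<le> exp (\<kappa> * (norm (y + vec k))\<^sup>2)" by simp
    then have "K0 * exp (\<kappa> * R) * pd \<sigma>0 0 y \<le> K0 * exp (\<kappa> * (norm (y + vec k))\<^sup>2) * pd \<sigma>0 0 y"
      using K0 pd_nonneg[OF s0] by (intro mult_right_mono mult_left_mono) auto
    then show "K0 * exp (\<kappa> * R) * pd \<sigma>0 0 y \<le> pd \<sigma>1 (vec ((\<sigma>1\<^sup>2 - \<sigma>0\<^sup>2) / \<sigma>0\<^sup>2 * k)) y"
      using key[of y] by (simp add: d1_def)
  next
    fix y :: "real^'n" assume "\<kappa> * (norm (y + vec k))\<^sup>2 \<le> \<kappa> * R"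
    then have "exp (\<kappa> * (norm (y + vec k))\<^sup>2) \<le> exp (\<kappa> * R)" by simp
    then have "K0 * exp (\<kappa> * (norm (y + vec k))\<^sup>2) * pd \<sigma>0 0 y \<le> K0 * exp (\<kappa> * R) * pd \<sigma>0 0 y"
      using K0 pd_nonneg[OF s0] by (intro mult_right_mono mult_left_mono) auto
    then show "pd \<sigma>1 (vec ((\<sigma>1\<^sup>2 - \<sigma>0\<^sup>2) / \<sigma>0\<^sup>2 * k)) y \<le> K0 * exp (\<kappa> * R) * pd \<sigma>0 0 y"
      using key[of y] by (simp add: d1_def)
  qed
qed

lemma fin_Mg: "\<sigma> > 0 \<Longrightarrow> finite_measure (Mg \<sigma> (t::real^'n::finite))"
  by (rule prob_space.finite_measure[OF Mg_prob])

lemma Mg0_ball: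
  assumes s: "\<sigma> > 0"
  shows "measure (Mg \<sigma> (0::real^'n::finite)) {y. (norm (y + vec k))\<^sup>2 \<le> R} = G TYPE('n) (k / \<sigma>) (R / \<sigma>\<^sup>2)"
  using Mg_ball[OF s, of 0 k R, where 'n='n] by simp

lemma mono_gt_core:
  fixes \<sigma>0 \<sigma>1 p u u' :: real
  assumes s1: "0 < \<sigma>1" and s10: "\<sigma>1 < \<sigma>0" and p: "0 < p" "p < 1" and u: "0 \<le> u" "u \<le> u'"
  shows "G TYPE('n::finite) (\<sigma>1*u) (\<sigma>0\<^sup>2/\<sigma>1\<^sup>2 * Q TYPE('n) (\<sigma>0*u) p)
       \<le> G TYPE('n) (\<sigma>1*u') (\<sigma>0\<^sup>2/\<sigma>1\<^sup>2 * Q TYPE('n) (\<sigma>0*u') p)"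
proof -
  have s0: "\<sigma>0 > 0" using s1 s10 by simp
  define c where "c = \<sigma>0\<^sup>2 - \<sigma>1\<^sup>2"
  have c: "c > 0" using s1 s10 by (simp add: c_def power_strict_mono)
  define T where "T = Q TYPE('n) (\<sigma>0*u) p"
  define T' where "T' = Q TYPE('n) (\<sigma>0*u') p"
  define k where "k = \<sigma>0\<^sup>2 * u'"
  define d1 where "d1 = (\<sigma>1\<^sup>2-\<sigma>0\<^sup>2)/\<sigma>0\<^sup>2*k"
  have d1: "d1 = - c * u'" using s0 by (simp add: d1_def k_def c_def)
  define M0 where "M0 = Mg \<sigma>0 (0::real^'n)"
  define M1 where "M1 = Mg \<sigma>1 (vec d1 :: real^'n)"
  define D where "D = {y::real^'n. (norm (y + vec k))\<^sup>2 \<le> \<sigma>0\<^sup>2 * T'}"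
  define S where "S = {y::real^'n. (norm (y + vec (\<sigma>0\<^sup>2*u + c*(u'-u))))\<^sup>2 \<le> \<sigma>0\<^sup>2 * T}"
  have M0D: "measure M0 D = p"
  proof -
    have "measure M0 D = G TYPE('n) (k / \<sigma>0) (\<sigma>0\<^sup>2 * T' / \<sigma>0\<^sup>2)"
      unfolding M0_def D_def by (rule Mg0_ball[OF s0])
    also have "k / \<sigma>0 = \<sigma>0 * u'" using s0 by (simp add: k_def power2_eq_square)
    also have "\<sigma>0\<^sup>2 * T' / \<sigma>0\<^sup>2 = T'" using s0 by simp
    finally show ?thesis unfolding T'_def using Q_exact[OF p, where 'n='n] by simp
  qed
  have M0S: "measure M0 S \<le> p"
  proof -
    have "measure M0 S = G TYPE('n) ((\<sigma>0\<^sup>2*u + c*(u'-u)) / \<sigma>0) (\<sigma>0\<^sup>2 * T / \<sigma>0\<^sup>2)"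
      unfolding M0_def S_def by (rule Mg0_ball[OF s0])
    also have "\<sigma>0\<^sup>2 * T / \<sigma>0\<^sup>2 = T" using s0 by simp
    also have "G TYPE('n) ((\<sigma>0\<^sup>2*u + c*(u'-u)) / \<sigma>0) T \<le> G TYPE('n) (\<sigma>0 * u) T"
    proof (rule G_anderson)
      have "\<sigma>0 * u = \<sigma>0\<^sup>2*u / \<sigma>0" using s0 by (simp add: power2_eq_square)
      also have "\<dots> \<le> (\<sigma>0\<^sup>2*u + c*(u'-u)) / \<sigma>0"
        using s0 c u by (intro divide_right_mono) auto
      moreover have "\<sigma>0\<^sup>2*u + c*(u'-u) \<ge> 0" using c u by simp
      ultimately show "\<bar>\<sigma>0 * u\<bar> \<le> \<bar>(\<sigma>0\<^sup>2*u + c*(u'-u)) / \<sigma>0\<bar>" using s0 u by simp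
    qed
    also have "G TYPE('n) (\<sigma>0 * u) T = p" unfolding T_def using Q_exact[OF p, where 'n='n] by simp
    finally show ?thesis .
  qed
  have M1D: "measure M1 D = G TYPE('n) (\<sigma>1*u') (\<sigma>0\<^sup>2/\<sigma>1\<^sup>2 * T')"
  proof -
    have "measure M1 D = G TYPE('n) ((d1 + k) / \<sigma>1) (\<sigma>0\<^sup>2 * T' / \<sigma>1\<^sup>2)"
      unfolding M1_def D_def by (rule Mg_ball[OF s1])
    also have "(d1 + k) / \<sigma>1 = \<sigma>1 * u'" using s1 by (simp add: d1 k_def c_def power2_eq_square field_simps)
    finally show ?thesis by simp
  qed
  have M1S: "measure M1 S = G TYPE('n) (\<sigma>1*u) (\<sigma>0\<^sup>2/\<sigma>1\<^sup>2 * T)"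
  proof -
    have "measure M1 S = G TYPE('n) ((d1 + (\<sigma>0\<^sup>2*u + c*(u'-u))) / \<sigma>1) (\<sigma>0\<^sup>2 * T / \<sigma>1\<^sup>2)"
      unfolding M1_def S_def by (rule Mg_ball[OF s1])
    also have "(d1 + (\<sigma>0\<^sup>2*u + c*(u'-u))) / \<sigma>1 = \<sigma>1 * u" using s1 by (simp add: d1 c_def power2_eq_square field_simps)
    finally show ?thesis by simp
  qed
  define \<kappa> where "\<kappa> = (1/\<sigma>0\<^sup>2 - 1/\<sigma>1\<^sup>2)/2"
  have \<kappa>: "\<kappa> \<le> 0" using s1 s10 by (simp add: \<kappa>_def frac_le power_mono)
  obtain K where K: "K \<ge> 0" and
    KK: "\<And>y::real^'n. \<kappa> * (\<sigma>0\<^sup>2 * T') \<le> \<kappa> * (norm (y + vec k))\<^sup>2 \<Longrightarrow> K * pd \<sigma>0 0 y \<le> pd \<sigma>1 (vec d1) y"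
        "\<And>y::real^'n. \<kappa> * (norm (y + vec k))\<^sup>2 \<le> \<kappa> * (\<sigma>0\<^sup>2 * T') \<Longrightarrow> pd \<sigma>1 (vec d1) y \<le> K * pd \<sigma>0 0 y"
    using LR[OF s0 s1, of "\<sigma>0\<^sup>2 * T'" k, where 'n='n] unfolding \<kappa>_def[symmetric] d1_def[symmetric] by blast
  have "measure M1 S \<le> measure M1 D"
  proof (rule NP[where densA="pd \<sigma>0 0" and densB="pd \<sigma>1 (vec d1)" and N=lborel and K=K])
    show "finite_measure M0" unfolding M0_def by (rule fin_Mg[OF s0])
    show "finite_measure M1" unfolding M1_def by (rule fin_Mg[OF s1])
    show "M0 = density lborel (\<lambda>y. ennreal (pd \<sigma>0 0 y))" by (simp add: M0_def Mg_def)
    show "M1 = density lborel (\<lambda>y. ennreal (pd \<sigma>1 (vec d1) y))" by (simp add: M1_def Mg_def)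
    show "D \<in> sets lborel" "S \<in> sets lborel" unfolding D_def S_def by simp_all
    show "\<And>y. 0 \<le> pd \<sigma>0 0 y" using s0 by (rule pd_nonneg)
    show "\<And>y. 0 \<le> pd \<sigma>1 (vec d1) y" using s1 by (rule pd_nonneg)
    show "measure M0 S \<le> measure M0 D" using M0S M0D by simp
    show "K * pd \<sigma>0 0 y \<le> pd \<sigma>1 (vec d1) y" if "y \<in> D" for y
      using that \<kappa> by (intro KK(1)) (simp add: D_def mult_left_mono_neg)
    show "pd \<sigma>1 (vec d1) y \<le> K * pd \<sigma>0 0 y" if "y \<notin> D" for y
      using that \<kappa> by (intro KK(2)) (simp add: D_def mult_left_mono_neg)
  qed (use K in auto)
  then show ?thesis using M1S M1D by (simp add: T_def T'_def)
qed

lemma space_Mg[simp]: "space (Mg \<sigma> t) = UNIV"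
  by (simp add: Mg_def)

lemma Mg_compl:
  assumes s: "\<sigma> > 0" and A: "A \<in> sets borel"
  shows "measure (Mg \<sigma> (t::real^'n::finite)) (UNIV - A) = 1 - measure (Mg \<sigma> t) A"
proof -
  interpret P: prob_space "Mg \<sigma> t" by (rule Mg_prob[OF s])
  show ?thesis using P.finite_measure_compl[of A] A P.prob_space by simp
qed

lemma mono_lt_core:
  fixes \<sigma>0 \<sigma>1 p u u' :: real
  assumes s0: "0 < \<sigma>0" and s01: "\<sigma>0 < \<sigma>1" and p: "0 < p" "p < 1" and u: "0 \<le> u" "u \<le> u'"
  shows "G TYPE('n::finite) (\<sigma>1*u') (\<sigma>0\<^sup>2/\<sigma>1\<^sup>2 * Q TYPE('n) (\<sigma>0*u') p)
       \<le> G TYPE('n) (\<sigma>1*u) (\<sigma>0\<^sup>2/\<sigma>1\<^sup>2 * Q TYPE('n) (\<sigma>0*u) p)"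
proof -
  have s1: "\<sigma>1 > 0" using s0 s01 by simp
  define c where "c = \<sigma>1\<^sup>2 - \<sigma>0\<^sup>2"
  have c: "c > 0" using s0 s01 by (simp add: c_def power_strict_mono)
  define T where "T = Q TYPE('n) (\<sigma>0*u) p"
  define T' where "T' = Q TYPE('n) (\<sigma>0*u') p"
  define k where "k = \<sigma>0\<^sup>2 * u'"
  define d1 where "d1 = (\<sigma>1\<^sup>2-\<sigma>0\<^sup>2)/\<sigma>0\<^sup>2*k"
  have d1: "d1 = c * u'" using s0 by (simp add: d1_def k_def c_def)
  define M0 where "M0 = Mg \<sigma>0 (0::real^'n)"
  define M1 where "M1 = Mg \<sigma>1 (vec d1 :: real^'n)"
  define B' where "B' = {y::real^'n. (norm (y + vec k))\<^sup>2 \<le> \<sigma>0\<^sup>2 * T'}"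
  define B where "B = {y::real^'n. (norm (y + vec (\<sigma>0\<^sup>2*u)))\<^sup>2 \<le> \<sigma>0\<^sup>2 * T}"
  have M0B': "measure M0 B' = p"
  proof -
    have "measure M0 B' = G TYPE('n) (k / \<sigma>0) (\<sigma>0\<^sup>2 * T' / \<sigma>0\<^sup>2)"
      unfolding M0_def B'_def by (rule Mg0_ball[OF s0])
    also have "k / \<sigma>0 = \<sigma>0 * u'" using s0 by (simp add: k_def power2_eq_square)
    also have "\<sigma>0\<^sup>2 * T' / \<sigma>0\<^sup>2 = T'" using s0 by simp
    finally show ?thesis unfolding T'_def using Q_exact[OF p, where 'n='n] by simp
  qed
  have M0B: "measure M0 B = p"
  proof -
    have "measure M0 B = G TYPE('n) (\<sigma>0\<^sup>2*u / \<sigma>0) (\<sigma>0\<^sup>2 * T / \<sigma>0\<^sup>2)"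
      unfolding M0_def B_def by (rule Mg0_ball[OF s0])
    also have "\<sigma>0\<^sup>2*u / \<sigma>0 = \<sigma>0 * u" using s0 by (simp add: power2_eq_square)
    also have "\<sigma>0\<^sup>2 * T / \<sigma>0\<^sup>2 = T" using s0 by simp
    finally show ?thesis unfolding T_def using Q_exact[OF p, where 'n='n] by simp
  qed
  have M1B': "measure M1 B' = G TYPE('n) (\<sigma>1*u') (\<sigma>0\<^sup>2/\<sigma>1\<^sup>2 * T')"
  proof -
    have "measure M1 B' = G TYPE('n) ((d1 + k) / \<sigma>1) (\<sigma>0\<^sup>2 * T' / \<sigma>1\<^sup>2)"
      unfolding M1_def B'_def by (rule Mg_ball[OF s1])
    also have "(d1 + k) / \<sigma>1 = \<sigma>1 * u'" using s1 by (simp add: d1 k_def c_def power2_eq_square field_simps)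
    finally show ?thesis by simp
  qed
  have M1B: "measure M1 B \<le> G TYPE('n) (\<sigma>1*u) (\<sigma>0\<^sup>2/\<sigma>1\<^sup>2 * T)"
  proof -
    have "measure M1 B = G TYPE('n) ((d1 + \<sigma>0\<^sup>2*u) / \<sigma>1) (\<sigma>0\<^sup>2 * T / \<sigma>1\<^sup>2)"
      unfolding M1_def B_def by (rule Mg_ball[OF s1])
    also have "\<dots> \<le> G TYPE('n) (\<sigma>1*u) (\<sigma>0\<^sup>2 * T / \<sigma>1\<^sup>2)"
    proof (rule G_anderson)
      have "\<sigma>1 * u = (c*u + \<sigma>0\<^sup>2*u) / \<sigma>1" using s1 by (simp add: c_def power2_eq_square field_simps)
      also have "\<dots> \<le> (d1 + \<sigma>0\<^sup>2*u) / \<sigma>1"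
        using s1 c u by (intro divide_right_mono) (auto simp: d1 mult_left_mono)
      finally have "\<sigma>1 * u \<le> (d1 + \<sigma>0\<^sup>2*u) / \<sigma>1" .
      moreover have "d1 + \<sigma>0\<^sup>2*u \<ge> 0" using c u by (simp add: d1)
      ultimately show "\<bar>\<sigma>1 * u\<bar> \<le> \<bar>(d1 + \<sigma>0\<^sup>2*u) / \<sigma>1\<bar>" using s1 u by simp
    qed
    finally show ?thesis by simp
  qed
  define \<kappa> where "\<kappa> = (1/\<sigma>0\<^sup>2 - 1/\<sigma>1\<^sup>2)/2"
  have \<kappa>: "\<kappa> \<ge> 0" using s0 s01 by (simp add: \<kappa>_def frac_le power_mono)
  obtain K where K: "K \<ge> 0" and
    KK: "\<And>y::real^'n. \<kappa> * (\<sigma>0\<^sup>2 * T') \<le> \<kappa> * (norm (y + vec k))\<^sup>2 \<Longrightarrow> K * pd \<sigma>0 0 y \<le> pd \<sigma>1 (vec d1) y"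
        "\<And>y::real^'n. \<kappa> * (norm (y + vec k))\<^sup>2 \<le> \<kappa> * (\<sigma>0\<^sup>2 * T') \<Longrightarrow> pd \<sigma>1 (vec d1) y \<le> K * pd \<sigma>0 0 y"
    using LR[OF s0 s1, of "\<sigma>0\<^sup>2 * T'" k, where 'n='n] unfolding \<kappa>_def[symmetric] d1_def[symmetric] by blast
  have mB: "B \<in> sets borel" "B' \<in> sets borel" unfolding B_def B'_def by simp_all
  have "measure M1 (UNIV - B) \<le> measure M1 (UNIV - B')"
  proof (rule NP[where densA="pd \<sigma>0 0" and densB="pd \<sigma>1 (vec d1)" and N=lborel and K=K])
    show "finite_measure M0" unfolding M0_def by (rule fin_Mg[OF s0])
    show "finite_measure M1" unfolding M1_def by (rule fin_Mg[OF s1])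
    show "M0 = density lborel (\<lambda>y. ennreal (pd \<sigma>0 0 y))" by (simp add: M0_def Mg_def)
    show "M1 = density lborel (\<lambda>y. ennreal (pd \<sigma>1 (vec d1) y))" by (simp add: M1_def Mg_def)
    show "UNIV - B' \<in> sets lborel" "UNIV - B \<in> sets lborel" using mB by auto
    show "\<And>y. 0 \<le> pd \<sigma>0 0 y" using s0 by (rule pd_nonneg)
    show "\<And>y. 0 \<le> pd \<sigma>1 (vec d1) y" using s1 by (rule pd_nonneg)
    show "measure M0 (UNIV - B) \<le> measure M0 (UNIV - B')"
      using M0B M0B' mB by (simp add: M0_def Mg_compl[OF s0])
    show "K * pd \<sigma>0 0 y \<le> pd \<sigma>1 (vec d1) y" if "y \<in> UNIV - B'" for y
      using that \<kappa> by (intro KK(1)) (simp add: B'_def mult_left_mono)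
    show "pd \<sigma>1 (vec d1) y \<le> K * pd \<sigma>0 0 y" if "y \<notin> UNIV - B'" for y
      using that \<kappa> by (intro KK(2)) (simp add: B'_def mult_left_mono)
  qed (use K in auto)
  then have "measure M1 B' \<le> measure M1 B"
    using mB by (simp add: M1_def Mg_compl[OF s1])
  then show ?thesis using M1B M1B' by (simp add: T_def T'_def)
qed

lemma sq_helper:
  fixes \<sigma> a C n :: real
  assumes "\<sigma> > 0" "a \<ge> 0" "C > 0" "n > 0"
  shows "sqrt (\<sigma>\<^sup>2 * a\<^sup>2 / C / n) = \<sigma> * (a / sqrt (C * n))"
proof -
  have "\<sigma>\<^sup>2 * a\<^sup>2 / C / n = (\<sigma> * (a / sqrt (C * n)))\<^sup>2"
    using assms by (simp add: power_mult_distrib power_divide)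
  moreover have "\<sigma> * (a / sqrt (C * n)) \<ge> 0" using assms by simp
  ultimately show ?thesis by (metis real_sqrt_abs abs_of_nonneg)
qed

theorem mainTheorem11:
  fixes sigma0 pA sigma1 :: real
  assumes "sigma0 > 0" and "0 < pA" and "pA < 1"
  shows "(0 < sigma1 \<and> sigma1 < sigma0 \<longrightarrow>
            mono_on {0..} (\<lambda>a. xi_gt TYPE('n::finite) sigma0 pA a sigma1)) \<and>
         (sigma1 > sigma0 \<longrightarrow>
            mono_on {0..} (\<lambda>a. xi_lt TYPE('n::finite) sigma0 pA a sigma1))"
proof (intro conjI impI)
  have n: "real CARD('n) > 0" by simp
  assume h: "0 < sigma1 \<and> sigma1 < sigma0"
  then have s1: "0 < sigma1" and s10: "sigma1 < sigma0" by auto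
  define C where "C = (sigma0\<^sup>2 - sigma1\<^sup>2)\<^sup>2"
  have C: "C > 0" using s1 s10 by (simp add: C_def power_strict_mono)
  define u where "u a = a / sqrt (C * real CARD('n))" for a
  have xi: "xi_gt TYPE('n) sigma0 pA a sigma1
      = G TYPE('n) (sigma1 * u a) (sigma0\<^sup>2/sigma1\<^sup>2 * Q TYPE('n) (sigma0 * u a) (1 - pA))" if "a \<ge> 0" for a
    unfolding xi_gt_def chi2_G qf_Q
    using sq_helper[OF s1 that C n] sq_helper[OF assms(1) that C n]
    by (simp add: u_def C_def)
  show "mono_on {0..} (\<lambda>a. xi_gt TYPE('n) sigma0 pA a sigma1)"
  proof (rule mono_onI)
    fix a b :: real assume ab: "a \<in> {0..}" "b \<in> {0..}" "a \<le> b"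
    have "u a \<le> u b" "0 \<le> u a" using ab C unfolding u_def by (auto intro: divide_right_mono)
    then show "xi_gt TYPE('n) sigma0 pA a sigma1 \<le> xi_gt TYPE('n) sigma0 pA b sigma1"
      using ab xi mono_gt_core[OF s1 s10, of "1 - pA" "u a" "u b", where 'n='n] assms by simp
  qed
next
  have n: "real CARD('n) > 0" by simp
  assume s01: "sigma1 > sigma0"
  have s1: "sigma1 > 0" using s01 assms by simp
  define C where "C = (sigma1\<^sup>2 - sigma0\<^sup>2)\<^sup>2"
  have C: "C > 0" using s01 assms by (simp add: C_def power_strict_mono)
  define u where "u a = a / sqrt (C * real CARD('n))" for a
  have xi: "xi_lt TYPE('n) sigma0 pA a sigma1
      = 1 - G TYPE('n) (sigma1 * u a) (sigma0\<^sup>2/sigma1\<^sup>2 * Q TYPE('n) (sigma0 * u a) pA)" if "a \<ge> 0" for a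
    unfolding xi_lt_def chi2_G qf_Q
    using sq_helper[OF s1 that C n] sq_helper[OF assms(1) that C n]
    by (simp add: u_def C_def)
  show "mono_on {0..} (\<lambda>a. xi_lt TYPE('n) sigma0 pA a sigma1)"
  proof (rule mono_onI)
    fix a b :: real assume ab: "a \<in> {0..}" "b \<in> {0..}" "a \<le> b"
    have "u a \<le> u b" "0 \<le> u a" using ab C unfolding u_def by (auto intro: divide_right_mono)
    then show "xi_lt TYPE('n) sigma0 pA a sigma1 \<le> xi_lt TYPE('n) sigma0 pA b sigma1"
      using ab xi mono_lt_core[OF assms(1) s01, of pA "u a" "u b", where 'n='n] assms by simp
  qed
qed

end
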